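(* For $i\in\{1,2\}$ let $(\mathcal B_{i,\mathbb R},\mathcal S_i,e_i,m_i)$ be as in the context with the same constant $\kappa$. Let $A\in L(\mathcal B_{1,\mathbb R},\mathcal B_{2,\mathbb R})$ with $A(\mathcal C_{1,\mathbb R})\subset\mathcal C_{2,\mathbb R}$ and $\Delta_{\mathbb R}:=\operatorname{diam}_{d_H}(A(\mathcal C_{1,\mathbb R}))<\infty$, and extend $A$ complex-linearly to $\mathcal B_{1,\mathbb C}\to\mathcal B_{2,\mathbb C}$. Then \[\Delta_{\mathbb C}:=\operatorname{diam}_{\delta_{\mathcal C_{2,\mathbb C}}}(A(\mathcal C_{1,\mathbb C}))\le8\Delta_{\mathbb R}+2\ln[3\sqrt2\kappa^{-2}].\]
   Context: Cone setting. $V$ is a real topological vector space, $\mathcal S\subset V'$ a set of linear functionals such that $\ell(x)=0$ for all $\ell\in\mathcal S$ implies $x=0$, $C_{\mathbb R}=\{h\in V\setminus\{0\}:\ell(h)\ge0\ \forall\ell\in\mathcal S\}$, and $e\in C_{\mathbb R}$ such that for every $h\in V$ some $\lambda\ge0$ has $\lambda e-h\in C_{\mathbb R}$. Norm $\|h\|=\inf\{\lambda\ge0:\ell(\lambda e\pm h)\ge0\ \forall\ell\in\mathcal S\}$; $\mathcal B_{\mathbb R}$ the completion; $\mathcal C_{\mathbb R}=\{h\in\mathcal B_{\mathbb R}\setminus\{0\}:\ell(h)\ge0\ \forall\ell\in\mathcal S\}$. $\mathcal S_*$ is the weak-$*$ closure of the convex hull of $\{\lambda\ell:\lambda>0,\ell\in\mathcal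 S\}$; there are $m\in\mathcal S_*$, $\kappa\in(0,1)$ with $m(e)=1$ and $m(h)\ge\kappa\|h\|$ on $\mathcal C_{\mathbb R}$. Hilbert metric on $\mathcal C_{\mathbb R}$: $d_H(h,g)=\ln(\beta/\alpha)$, $\alpha=\sup\{\lambda>0:g-\lambda h\in\mathcal C_{\mathbb R}\}$, $\beta=\inf\{\mu>0:\mu h-g\in\mathcal C_{\mathbb R}\}$. $\mathcal B_{\mathbb C}$ is the complexification (norm $\sup_\theta(\|\Re(e^{i\theta}(x+iy))\|^2+\|\Im(e^{i\theta}(x+iy))\|^2)^{1/2}$), real functionals extended complex-linearly. $\mathcal C_{\mathbb C}=\{z(x+iy):z\ne0,x,y\in\mathcal C_{\mathbb R}\}$, $\mathcal C'_{\mathbb C}=\{\ell\in\mathcal B'_{\mathbb C}:\ell(h)\ne0\ \forall h\in\mathcal C_{\mathbb C}\}$, $E(h,g)=\{\ell(h)/\ell(g):\ell\in\mathcal C'_{\mathbb C}\}$, $\delta_{\mathcal C}(h,g)=\ln\frac{\sup_{E(h,g)}|z|}{\inf_{E(h,g)}|z|}$; diameters in $\mathcal C_{\mathbb C}$ are w.r.t. $\delta_{\mathcal C}$. Objects of the $i$-th space carry index $i$. *)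

theory Defs
  imports "HOL-Analysis.Analysis"
begin

text \<open>The completion B_R is modelled as a Banach space type 'a
in which the original space V sits as a dense linear subspace; functionals of S are
their (unique) continuous extensions to B_R.\<close>

definition real_cone :: "('a::real_normed_vector \<Rightarrow> real) set \<Rightarrow> 'a set" where
  "real_cone S = {h. h \<noteq> 0 \<and> (\<forall>l\<in>S. 0 \<le> l h)}"

text \<open>Convex hull of the positive multiples of S: finite positive combinations.\<close>
definition pos_hull :: "('a \<Rightarrow> real) set \<Rightarrow> ('a \<Rightarrow> real) set" where
  "pos_hull S = {(\<lambda>x. \<Sum>i<n. c i * l i x) | (n::nat) c l. 0 < n \<and> (\<forall>i<n. 0 < c i \<and> l i \<in> S)}"

text \<open>Weak-* closure (pointwise convergence on V).\<close>
definition weak_star_closure :: "'a set \<Rightarrow> ('a \<Rightarrow> real) set \<Rightarrow> ('a \<Rightarrow> real) set" where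
  "weak_star_closure V T = {m. \<forall>F. finite F \<and> F \<subseteq> V \<longrightarrow>
      (\<forall>\<epsilon>>0. \<exists>f\<in>T. \<forall>x\<in>F. \<bar>f x - m x\<bar> < \<epsilon>)}"

definition cone_setting ::
  "'a::banach set \<Rightarrow> ('a \<Rightarrow> real) set \<Rightarrow> 'a \<Rightarrow> ('a \<Rightarrow> real) \<Rightarrow> real \<Rightarrow> bool" where
  "cone_setting V S e m \<kappa> \<longleftrightarrow>
     subspace V \<and> closure V = UNIV \<and>
     (\<forall>l\<in>S. bounded_linear l) \<and>
     (\<forall>x\<in>V. (\<forall>l\<in>S. l x = 0) \<longrightarrow> x = 0) \<and>
     e \<in> V \<and> e \<in> real_cone S \<and>
     (\<forall>h\<in>V. \<exists>t\<ge>0. t *\<^sub>R e - h \<in> real_cone S) \<and>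
     (\<forall>h\<in>V. norm h = Inf {t. 0 \<le> t \<and> (\<forall>l\<in>S. 0 \<le> l (t *\<^sub>R e + h) \<and> 0 \<le> l (t *\<^sub>R e - h))}) \<and>
     bounded_linear m \<and> m \<in> weak_star_closure V (pos_hull S) \<and> m e = 1 \<and>
     0 < \<kappa> \<and> \<kappa> < 1 \<and>
     (\<forall>h\<in>real_cone S. \<kappa> * norm h \<le> m h)"

definition eln :: "ereal \<Rightarrow> ereal" where
  "eln x = (if x = \<infinity> then \<infinity> else if x \<le> 0 then -\<infinity> else ereal (ln (real_of_ereal x)))"

definition hilbert_dist :: "('a::real_normed_vector \<Rightarrow> real) set \<Rightarrow> 'a \<Rightarrow> 'a \<Rightarrow> ereal" where
  "hilbert_dist S h g =
     (let \<alpha> = (SUP t\<in>{t::real. 0 < t \<and> g - t *\<^sub>R h \<in> real_cone S}. ereal t);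
          \<beta> = (INF t\<in>{t::real. 0 < t \<and> t *\<^sub>R h - g \<in> real_cone S}. ereal t)
      in eln \<beta> - eln \<alpha>)"

text \<open>Complexification: x + iy is represented by the pair (x,y).\<close>
definition cmul :: "complex \<Rightarrow> 'a::real_vector \<times> 'a \<Rightarrow> 'a \<times> 'a" where
  "cmul z u = (Re z *\<^sub>R fst u - Im z *\<^sub>R snd u, Im z *\<^sub>R fst u + Re z *\<^sub>R snd u)"

definition cnorm :: "'a::real_normed_vector \<times> 'a \<Rightarrow> real" where
  "cnorm u = (SUP \<theta>::real. sqrt ((norm (fst (cmul (cis \<theta>) u)))\<^sup>2 + (norm (snd (cmul (cis \<theta>) u)))\<^sup>2))"

definition cext :: "('a \<Rightarrow> 'b) \<Rightarrow> 'a \<times> 'a \<Rightarrow> 'b \<times> 'b" where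
  "cext A u = (A (fst u), A (snd u))"

definition cplx_cone :: "('a::real_normed_vector \<Rightarrow> real) set \<Rightarrow> ('a \<times> 'a) set" where
  "cplx_cone S = {cmul z (x, y) | z x y. z \<noteq> 0 \<and> x \<in> real_cone S \<and> y \<in> real_cone S}"

definition cbounded_linear :: "('a::real_normed_vector \<times> 'a \<Rightarrow> complex) \<Rightarrow> bool" where
  "cbounded_linear L \<longleftrightarrow>
     (\<forall>u v. L (fst u + fst v, snd u + snd v) = L u + L v) \<and>
     (\<forall>c u. L (cmul c u) = c * L u) \<and>
     (\<exists>K. \<forall>u. cmod (L u) \<le> K * cnorm u)"

definition cplx_cone_dual :: "('a::real_normed_vector \<Rightarrow> real) set \<Rightarrow> ('a \<times> 'a \<Rightarrow> complex) set" where
  "cplx_cone_dual S = {L. cbounded_linear L \<and> (\<forall>h\<in>cplx_cone S. L h \<noteq> 0)}"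

definition E_set :: "('a::real_normed_vector \<Rightarrow> real) set \<Rightarrow> 'a \<times> 'a \<Rightarrow> 'a \<times> 'a \<Rightarrow> complex set" where
  "E_set S h g = {L h / L g | L. L \<in> cplx_cone_dual S}"

definition cone_gauge :: "('a::real_normed_vector \<Rightarrow> real) set \<Rightarrow> 'a \<times> 'a \<Rightarrow> 'a \<times> 'a \<Rightarrow> ereal" where
  "cone_gauge S h g =
     eln (SUP z\<in>E_set S h g. ereal (cmod z)) - eln (INF z\<in>E_set S h g. ereal (cmod z))"

definition ediam :: "('p \<Rightarrow> 'p \<Rightarrow> ereal) \<Rightarrow> 'p set \<Rightarrow> ereal" where
  "ediam d X = (SUP h\<in>X. SUP g\<in>X. d h g)"

end

theory Submission
  imports Defs
begin


definition K0 :: "('a::real_normed_vector \<Rightarrow> real) set \<Rightarrow> 'a set" where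
  "K0 S = {h. \<forall>l\<in>S. 0 \<le> l h}"

lemma blin: assumes "bounded_linear f"
  shows "f (x + y) = f x + f y" "f (x - y) = f x - f y" "f (r *\<^sub>R x) = r *\<^sub>R f x" "f 0 = 0" "f (- x) = - f x"
  using bounded_linear.linear[OF assms]
  by (simp_all add: real_vector.linear_add real_vector.linear_diff linear_cmul real_vector.linear_0 real_vector.linear_neg)

lemma real_cone_K0: "real_cone S = K0 S - {0}"
  by (auto simp: real_cone_def K0_def)

lemma K0_0: "0 \<in> K0 S" if "\<forall>l\<in>S. bounded_linear l"
  using that by (auto simp: K0_def blin(4))

lemma K0_add: "\<forall>l\<in>S. bounded_linear l \<Longrightarrow> x \<in> K0 S \<Longrightarrow> y \<in> K0 S \<Longrightarrow> x + y \<in> K0 S"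
  by (auto simp: K0_def blin(1))

lemma K0_scale: "\<forall>l\<in>S. bounded_linear l \<Longrightarrow> x \<in> K0 S \<Longrightarrow> 0 \<le> r \<Longrightarrow> r *\<^sub>R x \<in> K0 S"
  by (auto simp: K0_def blin(3))

lemma cs_facts:
  assumes "cone_setting V S e m \<kappa>"
  shows "\<forall>l\<in>S. bounded_linear l" "bounded_linear m" "0 < \<kappa>" "\<kappa> < 1"
    "\<And>h. h \<in> real_cone S \<Longrightarrow> 0 < m h"
    "\<And>h. h \<in> K0 S \<Longrightarrow> 0 \<le> m h"
    "\<And>h. h \<in> K0 S \<Longrightarrow> - h \<in> K0 S \<Longrightarrow> h = 0"
proof -
  show bl: "\<forall>l\<in>S. bounded_linear l" "bounded_linear m" "0 < \<kappa>" "\<kappa> < 1"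
    using assms by (auto simp: cone_setting_def)
  have k: "\<And>h. h \<in> real_cone S \<Longrightarrow> \<kappa> * norm h \<le> m h" using assms by (auto simp: cone_setting_def)
  show pos: "\<And>h. h \<in> real_cone S \<Longrightarrow> 0 < m h"
  proof -
    fix h assume h: "h \<in> real_cone S"
    then have "h \<noteq> 0" by (auto simp: real_cone_def)
    then have "0 < \<kappa> * norm h" using bl(3) by simp
    then show "0 < m h" using k[OF h] by linarith
  qed
  show "\<And>h. h \<in> K0 S \<Longrightarrow> 0 \<le> m h"
  proof -
    fix h assume "h \<in> K0 S"
    then show "0 \<le> m h"
    proof (cases "h = 0")
      case False
      then have "h \<in> real_cone S" using \<open>h \<in> K0 S\<close> by (simp add: real_cone_K0)
      then show ?thesis using pos by (simp add: less_imp_le)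
    qed (simp add: blin(4)[OF bl(2)])
  qed
  show "\<And>h. h \<in> K0 S \<Longrightarrow> - h \<in> K0 S \<Longrightarrow> h = 0"
  proof (rule ccontr)
    fix h assume h: "h \<in> K0 S" "- h \<in> K0 S" "h \<noteq> 0"
    then have "0 < m h" "0 < m (- h)" by (auto simp: real_cone_K0 intro!: pos)
    then show False using blin(5)[OF bl(2)] by auto
  qed
qed



lemma hilb_bound:
  assumes cs: "cone_setting V S e m \<kappa>" and x0: "x0 \<in> real_cone S" and x: "x \<in> real_cone S"
    and d: "hilbert_dist S x0 x \<le> ereal \<Delta>"
  shows "0 \<le> \<Delta> \<and> (\<exists>t1 t2. 0 < t1 \<and> x - t1 *\<^sub>R x0 \<in> K0 S \<and> t2 *\<^sub>R x0 - x \<in> K0 S \<and> t2 \<le> exp \<Delta> / \<kappa> * t1)"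
proof -
  note F = cs_facts[OF cs]
  define Sa where "Sa = {t::real. 0 < t \<and> x - t *\<^sub>R x0 \<in> real_cone S}"
  define Sb where "Sb = {t::real. 0 < t \<and> t *\<^sub>R x0 - x \<in> real_cone S}"
  define c where "c = m x / m x0"
  have mx0: "0 < m x0" using F(5)[OF x0] .
  have mx: "0 < m x" using F(5)[OF x] .
  have cpos: "0 < c" unfolding c_def using mx0 mx by simp
  have ha: "t < c" if "t \<in> Sa" for t
  proof -
    have "0 < m (x - t *\<^sub>R x0)" using that F(5) unfolding Sa_def by auto
    then have "t * m x0 < m x" using blin[OF F(2)] by simp
    then show ?thesis unfolding c_def using mx0 by (simp add: field_simps)
  qed
  have hb: "c < t" if "t \<in> Sb" for t
  proof -
    have "0 < m (t *\<^sub>R x0 - x)" using that F(5) unfolding Sb_def by auto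
    then have "m x < t * m x0" using blin[OF F(2)] by simp
    then show ?thesis unfolding c_def using mx0 by (simp add: field_simps)
  qed
  define \<alpha> where "\<alpha> = (SUP t\<in>Sa. ereal t)"
  define \<beta> where "\<beta> = (INF t\<in>Sb. ereal t)"
  have hd: "hilbert_dist S x0 x = eln \<beta> - eln \<alpha>"
    unfolding hilbert_dist_def \<alpha>_def \<beta>_def Sa_def Sb_def Let_def by simp
  have \<beta>c: "ereal c \<le> \<beta>" unfolding \<beta>_def by (rule INF_greatest) (use hb in \<open>force\<close>)
  have \<alpha>c: "\<alpha> \<le> ereal c" unfolding \<alpha>_def by (rule SUP_least) (use ha in \<open>force\<close>)
  have "\<not> \<beta> \<le> 0" using \<beta>c cpos by (cases \<beta>) auto
  then have eb: "eln \<beta> \<noteq> -\<infinity>" unfolding eln_def by auto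
  have Sa_ne: "Sa \<noteq> {}"
  proof
    assume "Sa = {}"
    then have "\<alpha> = -\<infinity>" unfolding \<alpha>_def by (simp add: bot_ereal_def)
    then have "eln \<alpha> = -\<infinity>" unfolding eln_def by simp
    then have "hilbert_dist S x0 x = \<infinity>" using hd eb by (cases "eln \<beta>") auto
    then show False using d by simp
  qed
  then obtain t0 where t0: "t0 \<in> Sa" by blast
  have t0p: "0 < t0" using t0 unfolding Sa_def by simp
  have \<alpha>t0: "ereal t0 \<le> \<alpha>" unfolding \<alpha>_def using t0 by (rule SUP_upper)
  obtain a where a: "\<alpha> = ereal a" using \<alpha>t0 \<alpha>c by (cases \<alpha>) auto
  have apos: "0 < a" using \<alpha>t0 a t0p by simp
  have ac: "a \<le> c" using \<alpha>c a by simp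
  have ea: "eln \<alpha> = ereal (ln a)" using a apos unfolding eln_def by simp
  have Sb_ne: "Sb \<noteq> {}"
  proof
    assume "Sb = {}"
    then have "\<beta> = \<infinity>" unfolding \<beta>_def by (simp add: top_ereal_def)
    then have "eln \<beta> = \<infinity>" unfolding eln_def by simp
    then have "hilbert_dist S x0 x = \<infinity>" using hd ea by simp
    then show False using d by simp
  qed
  then obtain s0 where s0: "s0 \<in> Sb" by blast
  have \<beta>s0: "\<beta> \<le> ereal s0" unfolding \<beta>_def using s0 by (rule INF_lower)
  obtain b where b: "\<beta> = ereal b" using \<beta>s0 \<beta>c by (cases \<beta>) auto
  have cb: "c \<le> b" using \<beta>c b by simp
  have eb': "eln \<beta> = ereal (ln b)" using b cb cpos unfolding eln_def by simp
  have lnd: "ln b - ln a \<le> \<Delta>" using d hd ea eb' by simp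
  have "ln a \<le> ln b" using apos ac cb by simp
  then have D0: "0 \<le> \<Delta>" using lnd by linarith
  have ble: "b \<le> exp \<Delta> * a"
  proof -
    have "b = exp (ln b)" using cb cpos by simp
    also have "\<dots> \<le> exp (\<Delta> + ln a)" using lnd by simp
    also have "\<dots> = exp \<Delta> * a" using apos by (simp add: exp_add)
    finally show ?thesis .
  qed
  have k: "0 < \<kappa>" "\<kappa> < 1" using F by auto
  define q where "q = sqrt \<kappa>"
  have q: "0 < q" "q < 1" "q * q = \<kappa>" unfolding q_def using k by (auto simp: real_sqrt_less_iff)
  have "ereal (a * q) < \<alpha>" using a apos q by simp
  then obtain t1 where t1: "t1 \<in> Sa" "a * q < t1" unfolding \<alpha>_def by (auto simp: less_SUP_iff)
  have "\<beta> < ereal (b / q)" using b cb cpos q by (simp add: field_simps)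
  then obtain t2 where t2: "t2 \<in> Sb" "t2 < b / q" unfolding \<beta>_def by (auto simp: INF_less_iff)
  have "t2 \<le> exp \<Delta> / \<kappa> * t1"
  proof -
    have "t2 * q < b" using t2 q by (simp add: field_simps)
    also have "b \<le> exp \<Delta> * a" by (rule ble)
    also have "exp \<Delta> * a * q \<le> exp \<Delta> * t1" using t1 by simp
    then have "exp \<Delta> * a \<le> exp \<Delta> * t1 / q" using q by (simp add: field_simps)
    finally have "t2 * q < exp \<Delta> * t1 / q" .
    then have "t2 * q * q < exp \<Delta> * t1 / q * q" using mult_strict_right_mono q(1) by blast
    then have "t2 * \<kappa> < exp \<Delta> * t1" using q by (simp add: mult.assoc)
    then show ?thesis using k by (simp add: field_simps)
  qed
  moreover have "0 < t1" "x - t1 *\<^sub>R x0 \<in> K0 S" using t1 unfolding Sa_def by (auto simp: real_cone_K0)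
  moreover have "t2 *\<^sub>R x0 - x \<in> K0 S" using t2 unfolding Sb_def by (auto simp: real_cone_K0)
  ultimately show ?thesis using D0 by blast
qed



lemma Arg_polar: "z \<noteq> 0 \<Longrightarrow> Re z = cmod z * cos (Arg z) \<and> Im z = cmod z * sin (Arg z)"
proof -
  assume "z \<noteq> 0"
  then have "z = of_real (norm z) * exp (\<i> * of_real (Arg z))"
    using is_Arg_Arg unfolding is_Arg_def by blast
  then have e: "z = of_real (norm z) * cis (Arg z)" by (simp add: cis_conv_exp)
  have "Re z = Re (of_real (norm z) * cis (Arg z))" "Im z = Im (of_real (norm z) * cis (Arg z))"
    using e by (metis, metis)
  then show ?thesis by simp
qed

lemma cos_nonneg_bound: "- pi \<le> t \<Longrightarrow> t \<le> pi \<Longrightarrow> 0 \<le> cos t \<Longrightarrow> \<bar>t\<bar> \<le> pi / 2"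
proof (rule ccontr)
  assume a: "- pi \<le> t" "t \<le> pi" "0 \<le> cos t" "\<not> \<bar>t\<bar> \<le> pi / 2"
  have "0 < cos (pi - \<bar>t\<bar>)" using a by (intro cos_gt_zero_pi) auto
  moreover have "cos (pi - \<bar>t\<bar>) = - cos t" by (simp add: cos_diff)
  ultimately show False using a by simp
qed

lemma trig_quarter: "\<bar>\<phi>\<bar> \<le> pi / 4 \<Longrightarrow> \<bar>sin \<phi>\<bar> \<le> cos \<phi>"
proof -
  assume a: "\<bar>\<phi>\<bar> \<le> pi / 4"
  have s: "\<bar>sin \<phi>\<bar> = sin \<bar>\<phi>\<bar>"
  proof (cases "0 \<le> \<phi>")
    case True then show ?thesis using a by (simp add: sin_ge_zero)
  next
    case False
    have "0 \<le> sin (- \<phi>)" using a False by (intro sin_ge_zero) auto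
    then show ?thesis using False by simp
  qed
  have "sin \<bar>\<phi>\<bar> \<le> sin (pi/4)" using a by (subst sin_mono_le_eq) auto
  also have "\<dots> = cos (pi/4)" by (simp add: sin_45 cos_45)
  also have "\<dots> \<le> cos \<bar>\<phi>\<bar>" using a by (subst cos_mono_le_eq) auto
  finally show ?thesis using s by simp
qed

lemma sector:
  fixes W :: "complex set"
  assumes add: "\<And>a b. a \<in> W \<Longrightarrow> b \<in> W \<Longrightarrow> a + b \<in> W"
    and scl: "\<And>a r. a \<in> W \<Longrightarrow> 0 \<le> r \<Longrightarrow> complex_of_real r * a \<in> W"
    and N: "\<And>a b. a \<in> W \<Longrightarrow> b \<in> W \<Longrightarrow> a + \<i> * b = 0 \<Longrightarrow> a = 0"
    and pt: "\<And>a. a \<in> W \<Longrightarrow> - a \<in> W \<Longrightarrow> a = 0"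
    and one: "1 \<in> W"
  shows "\<exists>\<omega>. cmod \<omega> = 1 \<and> (\<forall>w\<in>W. \<bar>Im (\<omega> * w)\<bar> \<le> Re (\<omega> * w))"
proof -
  have F: "0 \<le> Re (w1 * cnj w2)" if w1: "w1 \<in> W" and w2: "w2 \<in> W" for w1 w2
  proof (rule ccontr)
    assume neg: "\<not> 0 \<le> Re (w1 * cnj w2)"
    then have nz: "w1 \<noteq> 0" "w2 \<noteq> 0" by auto
    define q where "q = w1 / w2"
    have "Re q = Re (w1 * cnj w2) / (cmod w2)^2"
      unfolding q_def by (simp add: Re_divide cmod_power2)
    then have Req: "Re q < 0" using neg nz by (simp add: divide_neg_pos)
    have w1q: "w1 = q * w2" unfolding q_def using nz by simp
    show False
    proof (cases "Im q \<le> 0")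
      case True
      define s2 where "s2 = - Re q"
      define t2 where "t2 = - Im q"
      have "complex_of_real s2 * w2 + w1 \<in> W" using Req by (intro add[OF scl[OF w2] w1]) (simp add: s2_def)
      moreover have "complex_of_real t2 * w2 \<in> W" using True scl[OF w2, of t2] unfolding t2_def by auto
      moreover have "(complex_of_real s2 * w2 + w1) + \<i> * (complex_of_real t2 * w2) = 0"
      proof -
        have "complex_of_real s2 + \<i> * complex_of_real t2 = - q"
          by (simp add: complex_eq_iff s2_def t2_def)
        have "(complex_of_real s2 * w2 + w1) + \<i> * (complex_of_real t2 * w2) = (complex_of_real s2 + \<i> * complex_of_real t2) * w2 + w1"
          by (simp add: algebra_simps)
        also have "\<dots> = (- q) * w2 + q * w2" by (simp only: \<open>_ = - q\<close> w1q[symmetric])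
        also have "\<dots> = 0" by simp
        finally show ?thesis .
      qed
      ultimately have "complex_of_real s2 * w2 + w1 = 0" using N by blast
      then have "- w1 = complex_of_real s2 * w2" by (simp add: add_eq_0_iff)
      then have "- w1 \<in> W" using scl[OF w2, of s2] Req unfolding s2_def by auto
      then show False using pt w1 nz by blast
    next
      case False
      define \<zeta> where "\<zeta> = - 1 / q"
      have qnz: "q \<noteq> 0" using Req by auto
      have "Re \<zeta> = - Re q / ((Re q)^2 + (Im q)^2)" unfolding \<zeta>_def by (simp add: Re_divide)
      moreover have "0 < (Re q)^2 + (Im q)^2" using Req by (simp add: add_pos_nonneg)
      ultimately have s1: "0 < Re \<zeta>" using Req by (simp add: divide_neg_pos)
      have "Im \<zeta> = Im q / ((Re q)^2 + (Im q)^2)" unfolding \<zeta>_def by (simp add: Im_divide)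
      then have t1: "0 < Im \<zeta>" using False \<open>0 < (Re q)^2 + (Im q)^2\<close> by simp
      have "complex_of_real (Re \<zeta>) * w1 + w2 \<in> W" using s1 scl[OF w1] add w2 by auto
      moreover have "complex_of_real (Im \<zeta>) * w1 \<in> W" using t1 scl[OF w1] by auto
      moreover have "(complex_of_real (Re \<zeta>) * w1 + w2) + \<i> * (complex_of_real (Im \<zeta>) * w1) = 0"
      proof -
        have "(complex_of_real (Re \<zeta>) * w1 + w2) + \<i> * (complex_of_real (Im \<zeta>) * w1) = \<zeta> * w1 + w2"
          by (simp add: algebra_simps complex_eq_iff)
        also have "\<dots> = 0" unfolding \<zeta>_def using w1q qnz by (simp add: field_simps)
        finally show ?thesis .
      qed
      ultimately have "complex_of_real (Re \<zeta>) * w1 + w2 = 0" using N by blast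
      then have "- w2 = complex_of_real (Re \<zeta>) * w1" by (simp add: add_eq_0_iff)
      then have "- w2 \<in> W" using scl[OF w1] s1 by auto
      then show False using pt w2 nz by blast
    qed
  qed
  have Rp: "0 \<le> Re w" if "w \<in> W" for w using F[OF that one] by simp
  define T where "T = Arg ` (W - {0})"
  have Tb: "\<bar>t\<bar> \<le> pi / 2" if tT: "t \<in> T" for t
  proof -
    obtain w where w: "w \<in> W" "w \<noteq> 0" "t = Arg w" using tT unfolding T_def by auto
    have "0 \<le> cmod w * cos t" using Arg_polar[OF w(2)] Rp[OF w(1)] w(3) by simp
    then have "0 \<le> cos t" using w(2) by (simp add: zero_le_mult_iff)
    then show ?thesis using w(3) mpi_less_Arg[of w] Arg_le_pi[of w] by (intro cos_nonneg_bound) auto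
  qed
  have Tp: "t1 - t2 \<le> pi / 2" if tT: "t1 \<in> T" "t2 \<in> T" for t1 t2
  proof -
    obtain w1 where w1: "w1 \<in> W" "w1 \<noteq> 0" "t1 = Arg w1" using tT unfolding T_def by auto
    obtain w2 where w2: "w2 \<in> W" "w2 \<noteq> 0" "t2 = Arg w2" using tT unfolding T_def by auto
    have "Re (w1 * cnj w2) = cmod w1 * cmod w2 * cos (t1 - t2)"
      using Arg_polar[OF w1(2)] Arg_polar[OF w2(2)] w1(3) w2(3) by (simp add: cos_diff algebra_simps)
    then have "0 \<le> cmod w1 * cmod w2 * cos (t1 - t2)" using F[OF w1(1) w2(1)] by simp
    moreover have "0 < cmod w1 * cmod w2" using w1(2) w2(2) by simp
    ultimately have "0 \<le> cos (t1 - t2)" by (simp add: zero_le_mult_iff)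
    then have "\<bar>t1 - t2\<bar> \<le> pi / 2" using Tb[OF tT(1)] Tb[OF tT(2)] by (intro cos_nonneg_bound) auto
    then show ?thesis by linarith
  qed
  have T0: "0 \<in> T" unfolding T_def using one by (auto intro!: image_eqI[where x=1])
  have Tne: "T \<noteq> {}" using T0 by blast
  have Tb2: "- (pi/2) \<le> t \<and> t \<le> pi/2" if "t \<in> T" for t
    using Tb[OF that] unfolding abs_le_iff by linarith
  have bdd: "bdd_above T" "bdd_below T"
  proof -
    show "bdd_above T" unfolding bdd_above_def using Tb2 by (intro exI[where x="pi/2"]) blast
    show "bdd_below T" unfolding bdd_below_def using Tb2 by (intro exI[where x="- (pi/2)"]) blast
  qed
  define tp where "tp = Sup T"
  define tm where "tm = Inf T"
  have tpu: "t \<le> tp" if "t \<in> T" for t unfolding tp_def using bdd that by (simp add: cSup_upper)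
  have tml: "tm \<le> t" if "t \<in> T" for t unfolding tm_def using bdd that by (simp add: cInf_lower)
  have tpm: "tp \<le> tm + pi / 2"
  proof -
    have "t \<le> tm + pi / 2" if "t \<in> T" for t
    proof -
      have "t - pi / 2 \<le> tm" unfolding tm_def using Tne
        by (rule cInf_greatest) (use Tp that in force)
      then show ?thesis by simp
    qed
    then show ?thesis unfolding tp_def using Tne by (intro cSup_least) auto
  qed
  define c where "c = (tp + tm) / 2"
  define \<omega> where "\<omega> = cis (- c)"
  have "cmod \<omega> = 1" unfolding \<omega>_def by simp
  moreover have "\<bar>Im (\<omega> * w)\<bar> \<le> Re (\<omega> * w)" if w: "w \<in> W" for w
  proof (cases "w = 0")
    case True then show ?thesis by simp
  next
    case False
    have tT: "Arg w \<in> T" unfolding T_def using w False by auto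
    have ph: "\<bar>Arg w - c\<bar> \<le> pi / 4" unfolding c_def abs_le_iff using tpu[OF tT] tml[OF tT] tpm by (intro conjI) (simp_all add: field_simps)
    have "Re (\<omega> * w) = cmod w * cos (Arg w - c)" "Im (\<omega> * w) = cmod w * sin (Arg w - c)"
      using Arg_polar[OF False] unfolding \<omega>_def by (simp_all add: cos_diff sin_diff algebra_simps)
    then show ?thesis using trig_quarter[OF ph] by (simp add: abs_mult mult_left_mono)
  qed
  ultimately show ?thesis by blast
qed



lemma ge1_of_sq: fixes u1 u2 :: real
  assumes "0 \<le> u1" "0 \<le> u2" "u1\<^sup>2 + u2\<^sup>2 = 2" "u2 \<le> u1" shows "1 \<le> u1"
proof (rule ccontr)
  assume "\<not> 1 \<le> u1"
  then have "u1 < 1" by simp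
  then have "u1\<^sup>2 < 1" "u2\<^sup>2 < 1" using assms by (auto intro: power_strict_mono[where n=2, of _ 1, simplified] le_less_trans)
  then show False using assms by simp
qed

lemma core_real:
  fixes u1 u2 P1 P2 Q1 Q2 a b a' b' \<rho> :: real
  assumes u: "0 \<le> u1" "0 \<le> u2" "u1\<^sup>2 + u2\<^sup>2 = 2" and r: "1 \<le> \<rho>" and pos: "0 < a" "0 < a'"
    and br: "b \<le> \<rho> * a" "b' \<le> \<rho> * a'"
    and P: "a * u1 \<le> P1" "P1 \<le> b * u1" "a * u2 \<le> P2" "P2 \<le> b * u2"
    and Q: "a' * u1 \<le> Q1" "Q1 \<le> b' * u1" "a' * u2 \<le> Q2" "Q2 \<le> b' * u2"
  shows "((a + a') / (1 + 2 * \<rho>))\<^sup>2 \<le> (P1 + Q2)\<^sup>2 + (P2 - Q1)\<^sup>2"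
proof -
  define M where "M = (a + a') / (1 + 2 * \<rho>)"
  have M0: "0 \<le> M" unfolding M_def using pos r by simp
  have den: "0 < 1 + 2 * \<rho>" using r by simp
  have ab: "a \<le> b" "a' \<le> b'"
  proof -
    have "a * u1 \<le> b * u1" "a * u2 \<le> b * u2" using P by auto
    moreover have "0 < u1 \<or> 0 < u2" using u by (cases "u1 = 0"; cases "u2 = 0") auto
    ultimately show "a \<le> b" by (auto simp: mult_le_cancel_right)
    have "a' * u1 \<le> b' * u1" "a' * u2 \<le> b' * u2" using Q by auto
    with \<open>0 < u1 \<or> 0 < u2\<close> show "a' \<le> b'" by (auto simp: mult_le_cancel_right)
  qed
  have key: "M \<le> P1 + Q2 \<or> M \<le> Q1 - P2 \<or> M \<le> P2 - Q1"
  proof (cases "u2 \<le> u1")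
    case True
    have u1: "1 \<le> u1" using ge1_of_sq[OF u True] .
    show ?thesis
    proof (cases "a' \<le> 2 * \<rho> * a")
      case True
      have "M \<le> a" unfolding M_def using den True by (simp add: divide_le_eq algebra_simps)
      also have "a \<le> a * u1" using u1 pos by simp
      also have "\<dots> \<le> P1 + Q2" using P Q u pos by (smt (verit) mult_nonneg_nonneg)
      finally show ?thesis by blast
    next
      case False
      have "b < a'"
      proof -
        have "2 * (\<rho> * a) < a'" using False by (simp add: mult.assoc)
        then show ?thesis using br pos r by (smt (verit) mult_left_mono)
      qed
      have "M \<le> a' / 2"
      proof -
        have h1: "2 * (\<rho> * a) < a'" using False by (simp add: mult.assoc)
        have h2: "a \<le> \<rho> * a" "a' \<le> \<rho> * a'" using r pos by simp_all
        have "(1 + 2 * \<rho>) * (a' / 2) = a' / 2 + \<rho> * a'" by (simp add: algebra_simps)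
        then have "a + a' \<le> (1 + 2 * \<rho>) * (a' / 2)" using h1 h2 by linarith
        then show ?thesis unfolding M_def using den by (simp add: divide_le_eq mult.commute)
      qed
      also have "a' / 2 \<le> a' - b"
      proof -
        have "2 * (\<rho> * a) < a'" using False by (simp add: mult.assoc)
        then show ?thesis using br by linarith
      qed
      also have "a' - b \<le> (a' - b) * u1" using u1 \<open>b < a'\<close> by simp
      also have "\<dots> = a' * u1 - b * u1" by (simp add: algebra_simps)
      also have "\<dots> \<le> a' * u1 - b * u2" using True ab pos by (smt (verit) mult_left_mono)
      also have "\<dots> \<le> Q1 - P2" using P Q by simp
      finally show ?thesis by blast
    qed
  next
    case False
    then have F: "u1 \<le> u2" by simp
    have u2: "1 \<le> u2" using ge1_of_sq[of u2 u1] u F by (simp add: add.commute)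
    show ?thesis
    proof (cases "a \<le> 2 * \<rho> * a'")
      case True
      have "M \<le> a'" unfolding M_def using den True by (simp add: divide_le_eq algebra_simps)
      also have "a' \<le> a' * u2" using u2 pos by simp
      also have "\<dots> \<le> P1 + Q2" using P Q u pos by (smt (verit) mult_nonneg_nonneg)
      finally show ?thesis by blast
    next
      case False
      have "b' < a"
      proof -
        have "2 * (\<rho> * a') < a" using False by (simp add: mult.assoc)
        then show ?thesis using br pos r by (smt (verit) mult_left_mono)
      qed
      have "M \<le> a / 2"
      proof -
        have h1: "2 * (\<rho> * a') < a" using False by (simp add: mult.assoc)
        have h2: "a \<le> \<rho> * a" "a' \<le> \<rho> * a'" using r pos by simp_all
        have "(1 + 2 * \<rho>) * (a / 2) = a / 2 + \<rho> * a" by (simp add: algebra_simps)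
        then have "a + a' \<le> (1 + 2 * \<rho>) * (a / 2)" using h1 h2 by linarith
        then show ?thesis unfolding M_def using den by (simp add: divide_le_eq mult.commute)
      qed
      also have "a / 2 \<le> a - b'"
      proof -
        have "2 * (\<rho> * a') < a" using False by (simp add: mult.assoc)
        then show ?thesis using br by linarith
      qed
      also have "a - b' \<le> (a - b') * u2" using u2 \<open>b' < a\<close> by simp
      also have "\<dots> = a * u2 - b' * u2" by (simp add: algebra_simps)
      also have "\<dots> \<le> a * u2 - b' * u1" using F ab pos by (smt (verit) mult_left_mono)
      also have "\<dots> \<le> P2 - Q1" using P Q by simp
      finally show ?thesis by blast
    qed
  qed
  have "M\<^sup>2 \<le> (P1 + Q2)\<^sup>2 + (P2 - Q1)\<^sup>2"
  proof -
    have sq: "M\<^sup>2 \<le> x\<^sup>2" if "M \<le> x" for x using M0 that by (simp add: power_mono)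
    have sq2: "M\<^sup>2 \<le> x\<^sup>2" if "M \<le> - x" for x using sq[OF that] by simp
    show ?thesis using key
    proof (elim disjE)
      assume "M \<le> P1 + Q2" then show ?thesis using sq[of "P1+Q2"] by (smt (verit) zero_le_power2)
    next
      assume "M \<le> Q1 - P2" then have "M \<le> - (P2 - Q1)" by simp
      then show ?thesis using sq2[of "P2 - Q1"] by (smt (verit) zero_le_power2)
    next
      assume "M \<le> P2 - Q1" then show ?thesis using sq[of "P2 - Q1"] by (smt (verit) zero_le_power2)
    qed
  qed
  then show ?thesis unfolding M_def .
qed



lemma cmul_simps: "cmul z (p, q) = (Re z *\<^sub>R p - Im z *\<^sub>R q, Im z *\<^sub>R p + Re z *\<^sub>R q)"
  by (simp add: cmul_def)

lemma dual_decomp: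
  assumes L: "L \<in> cplx_cone_dual S"
  shows "L (p, q) = L (p, 0) + \<i> * L (q, 0)"
    "L (p + q, 0) = L (p, 0) + L (q, 0)"
    "L (r *\<^sub>R p, 0) = complex_of_real r * L (p, 0)"
    "L (cmul z (p, q)) = z * (L (p, 0) + \<i> * L (q, 0))"
    "x \<in> real_cone S \<Longrightarrow> y \<in> real_cone S \<Longrightarrow> L (x, 0) + \<i> * L (y, 0) \<noteq> 0"
proof -
  have add: "\<And>u v. L (fst u + fst v, snd u + snd v) = L u + L v"
    and mul: "\<And>c u. L (cmul c u) = c * L u"
    using L by (auto simp: cplx_cone_dual_def cbounded_linear_def)
  have nz: "\<And>h. h \<in> cplx_cone S \<Longrightarrow> L h \<noteq> 0" using L by (auto simp: cplx_cone_dual_def)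
  have i: "L (0, q) = \<i> * L (q, 0)" for q
    using mul[of \<i> "(q, 0)"] by (simp add: cmul_def)
  show dec: "L (p, q) = L (p, 0) + \<i> * L (q, 0)" for p q
    using add[of "(p, 0)" "(0, q)"] i by simp
  show "L (p + q, 0) = L (p, 0) + L (q, 0)"
    using add[of "(p, 0)" "(q, 0)"] by simp
  show "L (r *\<^sub>R p, 0) = complex_of_real r * L (p, 0)"
    using mul[of "complex_of_real r" "(p, 0)"] by (simp add: cmul_def)
  show "L (cmul z (p, q)) = z * (L (p, 0) + \<i> * L (q, 0))"
    using mul[of z "(p, q)"] dec[of p q] by simp
  assume "x \<in> real_cone S" "y \<in> real_cone S"
  then have "cmul 1 (x, y) \<in> cplx_cone S" unfolding cplx_cone_def by (intro CollectI exI[of _ 1] exI[of _ x] exI[of _ y]) simp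
  then have "L (x, y) \<noteq> 0" using nz by (simp add: cmul_def)
  then show "L (x, 0) + \<i> * L (y, 0) \<noteq> 0" using dec[of x y] by simp
qed

lemma cbounds:
  fixes a b \<omega> :: complex
  assumes w: "cmod \<omega> = 1" "\<bar>Im \<omega>\<bar> \<le> Re \<omega>"
    and a: "\<bar>Im (a - of_real t1 * \<omega>)\<bar> \<le> Re (a - of_real t1 * \<omega>)" "\<bar>Im (of_real t2 * \<omega> - a)\<bar> \<le> Re (of_real t2 * \<omega> - a)"
    and b: "\<bar>Im (b - of_real s1 * \<omega>)\<bar> \<le> Re (b - of_real s1 * \<omega>)" "\<bar>Im (of_real s2 * \<omega> - b)\<bar> \<le> Re (of_real s2 * \<omega> - b)"
    and pos: "0 < t1" "0 < s1" and r: "t2 \<le> \<rho> * t1" "s2 \<le> \<rho> * s1" "1 \<le> \<rho>"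
  shows "(t1 + s1) / (sqrt 2 * (1 + 2 * \<rho>)) \<le> cmod (a + \<i> * b)" "cmod (a + \<i> * b) \<le> t2 + s2"
proof -
  define u1 where "u1 = Re \<omega> + Im \<omega>"
  define u2 where "u2 = Re \<omega> - Im \<omega>"
  have u: "0 \<le> u1" "0 \<le> u2" unfolding u1_def u2_def using w by (auto simp: abs_le_iff)
  have "(Re \<omega>)\<^sup>2 + (Im \<omega>)\<^sup>2 = 1" using w(1) by (simp add: cmod_def)
  then have u12: "u1\<^sup>2 + u2\<^sup>2 = 2" unfolding u1_def u2_def by (simp add: power2_eq_square algebra_simps)
  define P1 where "P1 = Re a + Im a"
  define P2 where "P2 = Re a - Im a"
  define Q1 where "Q1 = Re b + Im b"
  define Q2 where "Q2 = Re b - Im b"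
  have P: "t1 * u1 \<le> P1" "P1 \<le> t2 * u1" "t1 * u2 \<le> P2" "P2 \<le> t2 * u2"
    using a unfolding P1_def P2_def u1_def u2_def by (auto simp: abs_le_iff algebra_simps)
  have Q: "s1 * u1 \<le> Q1" "Q1 \<le> s2 * u1" "s1 * u2 \<le> Q2" "Q2 \<le> s2 * u2"
    using b unfolding Q1_def Q2_def u1_def u2_def by (auto simp: abs_le_iff algebra_simps)
  have upos: "0 < u1 + u2"
  proof (rule ccontr)
    assume "\<not> 0 < u1 + u2"
    then have "u1 = 0" "u2 = 0" using u by auto
    then show False using u12 by simp
  qed
  have "t1 * (u1 + u2) \<le> t2 * (u1 + u2)" "s1 * (u1 + u2) \<le> s2 * (u1 + u2)"
    using P Q by (simp_all add: distrib_left)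
  then have "t1 \<le> t2" "s1 \<le> s2" using upos by (simp_all add: mult_le_cancel_right_pos)
  then have t12: "0 \<le> t2" "0 \<le> s2" using pos by simp_all
  have norm_eq: "(cmod (a + \<i> * b))\<^sup>2 = ((P1 + Q2)\<^sup>2 + (P2 - Q1)\<^sup>2) / 2"
    unfolding P1_def P2_def Q1_def Q2_def cmod_power2 by (simp add: power2_eq_square algebra_simps)
  have core: "((t1 + s1) / (1 + 2 * \<rho>))\<^sup>2 \<le> (P1 + Q2)\<^sup>2 + (P2 - Q1)\<^sup>2"
    by (rule core_real[OF u u12 r(3) pos r(1) r(2) P Q])
  have "((t1 + s1) / (sqrt 2 * (1 + 2 * \<rho>)))\<^sup>2 = ((t1 + s1) / (1 + 2 * \<rho>))\<^sup>2 / 2"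
    by (simp add: power_divide power_mult_distrib)
  also have "\<dots> \<le> (cmod (a + \<i> * b))\<^sup>2" using core norm_eq by simp
  finally show "(t1 + s1) / (sqrt 2 * (1 + 2 * \<rho>)) \<le> cmod (a + \<i> * b)"
    by (rule power2_le_imp_le) simp
  have na: "cmod a \<le> t2"
  proof -
    have "(cmod a)\<^sup>2 = (P1\<^sup>2 + P2\<^sup>2) / 2" unfolding P1_def P2_def cmod_power2 by (simp add: power2_eq_square algebra_simps)
    also have "\<dots> \<le> ((t2 * u1)\<^sup>2 + (t2 * u2)\<^sup>2) / 2"
    proof -
      have "0 \<le> P1" "0 \<le> P2" using P u pos by (meson mult_nonneg_nonneg less_imp_le order_trans)+
      then have "P1\<^sup>2 \<le> (t2 * u1)\<^sup>2" "P2\<^sup>2 \<le> (t2 * u2)\<^sup>2" using P by (simp_all add: power_mono)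
      then show ?thesis by simp
    qed
    also have "\<dots> = t2\<^sup>2" using u12 by (simp add: power_mult_distrib flip: distrib_left)
    finally have "(cmod a)\<^sup>2 \<le> t2\<^sup>2" .
    then show ?thesis using t12 power2_le_imp_le by blast
  qed
  have nb: "cmod b \<le> s2"
  proof -
    have "(cmod b)\<^sup>2 = (Q1\<^sup>2 + Q2\<^sup>2) / 2" unfolding Q1_def Q2_def cmod_power2 by (simp add: power2_eq_square algebra_simps)
    also have "\<dots> \<le> ((s2 * u1)\<^sup>2 + (s2 * u2)\<^sup>2) / 2"
    proof -
      have "0 \<le> Q1" "0 \<le> Q2" using Q u pos by (meson mult_nonneg_nonneg less_imp_le order_trans)+
      then have "Q1\<^sup>2 \<le> (s2 * u1)\<^sup>2" "Q2\<^sup>2 \<le> (s2 * u2)\<^sup>2" using Q by (simp_all add: power_mono)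
      then show ?thesis by simp
    qed
    also have "\<dots> = s2\<^sup>2" using u12 by (simp add: power_mult_distrib flip: distrib_left)
    finally have "(cmod b)\<^sup>2 \<le> s2\<^sup>2" .
    then show ?thesis using t12 power2_le_imp_le by blast
  qed
  have "cmod (a + \<i> * b) \<le> cmod a + cmod (\<i> * b)" by (rule norm_triangle_ineq)
  also have "\<dots> = cmod a + cmod b" by (simp add: norm_mult)
  finally show "cmod (a + \<i> * b) \<le> t2 + s2" using na nb by simp
qed



lemma dual_bounds:
  assumes cs: "cone_setting V S e m \<kappa>" and L: "L \<in> cplx_cone_dual S" and x0: "x0 \<in> real_cone S"
    and r: "1 \<le> \<rho>"
    and T: "\<And>x. x \<in> P \<Longrightarrow> 0 < T1 x \<and> x - T1 x *\<^sub>R x0 \<in> K0 S \<and> T2 x *\<^sub>R x0 - x \<in> K0 S \<and> T2 x \<le> \<rho> * T1 x"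
  shows "\<exists>c>0. \<forall>x\<in>P. \<forall>y\<in>P. c * ((T1 x + T1 y) / (sqrt 2 * (1 + 2 * \<rho>))) \<le> cmod (L (x, 0) + \<i> * L (y, 0))
            \<and> cmod (L (x, 0) + \<i> * L (y, 0)) \<le> c * (T2 x + T2 y)"
proof -
  note F = cs_facts[OF cs]
  note D = dual_decomp[OF L]
  define lam where "lam p = L (p, 0)" for p
  have ladd: "lam (p + q) = lam p + lam q" for p q unfolding lam_def by (rule D(2))
  have lscl: "lam (r *\<^sub>R p) = complex_of_real r * lam p" for r p unfolding lam_def by (rule D(3))
  have l0: "lam 0 = 0" using lscl[of 0 0] by simp
  have ldiff: "lam (p - q) = lam p - lam q" for p q
    using ladd[of p "(-1) *\<^sub>R q"] lscl[of "-1" q] by simp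
  have ncone: "lam x + \<i> * lam y \<noteq> 0" if "x \<in> real_cone S" "y \<in> real_cone S" for x y
    unfolding lam_def by (rule D(5)[OF that])
  have Nk: "u = 0" if u: "u \<in> K0 S" and v: "v \<in> K0 S" and z: "lam u + \<i> * lam v = 0" for u v
  proof (rule ccontr)
    assume "u \<noteq> 0"
    then have ur: "u \<in> real_cone S" using u by (simp add: real_cone_K0)
    show False
    proof (cases "v = 0")
      case True
      then have "lam u = 0" using z l0 by simp
      then show False using ncone[OF ur ur] by simp
    next
      case False
      then have "v \<in> real_cone S" using v by (simp add: real_cone_K0)
      then show False using ncone[OF ur] z by blast
    qed
  qed
  have x0K: "x0 \<in> K0 S" using x0 by (simp add: real_cone_K0)
  define \<nu> where "\<nu> = lam x0"
  have \<nu>: "\<nu> \<noteq> 0" unfolding \<nu>_def using ncone[OF x0 x0] by auto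
  define W where "W = (\<lambda>p. lam p / \<nu>) ` K0 S"
  have "\<exists>\<omega>. cmod \<omega> = 1 \<and> (\<forall>w\<in>W. \<bar>Im (\<omega> * w)\<bar> \<le> Re (\<omega> * w))"
  proof (rule sector)
    fix a b assume "a \<in> W" "b \<in> W"
    then obtain p q where "p \<in> K0 S" "q \<in> K0 S" "a = lam p / \<nu>" "b = lam q / \<nu>" unfolding W_def by auto
    then show "a + b \<in> W" unfolding W_def using K0_add[OF F(1)] ladd
      by (intro image_eqI[where x="p + q"]) (auto simp: add_divide_distrib)
  next
    fix a and r :: real assume "a \<in> W" "0 \<le> r"
    then obtain p where "p \<in> K0 S" "a = lam p / \<nu>" unfolding W_def by auto
    then show "complex_of_real r * a \<in> W" unfolding W_def using K0_scale[OF F(1)] lscl \<open>0 \<le> r\<close>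
      by (intro image_eqI[where x="r *\<^sub>R p"]) auto
  next
    fix a b assume "a \<in> W" "b \<in> W" and z: "a + \<i> * b = 0"
    then obtain p q where pq: "p \<in> K0 S" "q \<in> K0 S" "a = lam p / \<nu>" "b = lam q / \<nu>" unfolding W_def by auto
    then have "(lam p + \<i> * lam q) / \<nu> = 0" using z by (simp add: add_divide_distrib)
    then have "lam p + \<i> * lam q = 0" using \<nu> by simp
    then have "p = 0" using Nk pq by blast
    then show "a = 0" using pq l0 by simp
  next
    fix a assume "a \<in> W" "- a \<in> W"
    then obtain p q where pq: "p \<in> K0 S" "q \<in> K0 S" "a = lam p / \<nu>" "- a = lam q / \<nu>" unfolding W_def by auto
    then have "lam p + lam q = 0" using \<nu> by (metis add_divide_distrib add.right_inverse divide_eq_0_iff)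
    then have s: "lam (p + q) = 0" using ladd by simp
    have pqK: "p + q \<in> K0 S" using K0_add[OF F(1) pq(1) pq(2)] .
    have "p + q = 0" using Nk[OF pqK pqK] s by simp
    then have "- p \<in> K0 S" using pq(2) by (metis add.commute add_eq_0_iff)
    then have "p = 0" using F(7) pq(1) by blast
    then show "a = 0" using pq l0 by simp
  next
    show "1 \<in> W" unfolding W_def using x0K \<nu> by (intro image_eqI[where x=x0]) (auto simp: \<nu>_def)
  qed
  then obtain \<omega> where \<omega>: "cmod \<omega> = 1" "\<And>w. w \<in> W \<Longrightarrow> \<bar>Im (\<omega> * w)\<bar> \<le> Re (\<omega> * w)" by blast
  define \<mu> where "\<mu> p = \<omega> * (lam p / \<nu>)" for p
  have sec: "\<bar>Im (\<mu> p)\<bar> \<le> Re (\<mu> p)" if "p \<in> K0 S" for p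
    unfolding \<mu>_def using \<omega>(2) that unfolding W_def by blast
  have \<mu>x0: "\<mu> x0 = \<omega>" unfolding \<mu>_def \<nu>_def using \<nu> \<nu>_def by simp
  have \<mu>diff: "\<mu> (p - q) = \<mu> p - \<mu> q" for p q unfolding \<mu>_def ldiff by (simp add: diff_divide_distrib algebra_simps)
  have \<mu>scl: "\<mu> (r *\<^sub>R p) = complex_of_real r * \<mu> p" for r p unfolding \<mu>_def lscl by simp
  have \<omega>sec: "\<bar>Im \<omega>\<bar> \<le> Re \<omega>" using sec[OF x0K] \<mu>x0 by simp
  have \<omega>0: "\<omega> \<noteq> 0" using \<omega>(1) by auto
  have lam_mu: "lam p = (\<nu> / \<omega>) * \<mu> p" for p unfolding \<mu>_def using \<nu> \<omega>0 by simp
  define c where "c = cmod \<nu>"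
  have cpos: "0 < c" unfolding c_def using \<nu> by simp
  have eq: "cmod (L (x, 0) + \<i> * L (y, 0)) = c * cmod (\<mu> x + \<i> * \<mu> y)" for x y
  proof -
    have "L (x, 0) + \<i> * L (y, 0) = (\<nu> / \<omega>) * (\<mu> x + \<i> * \<mu> y)"
      using lam_mu[of x] lam_mu[of y] unfolding lam_def by (simp add: algebra_simps)
    then show ?thesis unfolding c_def using \<omega>(1) by (simp add: norm_mult norm_divide)
  qed
  have pb: "(T1 x + T1 y) / (sqrt 2 * (1 + 2 * \<rho>)) \<le> cmod (\<mu> x + \<i> * \<mu> y) \<and> cmod (\<mu> x + \<i> * \<mu> y) \<le> T2 x + T2 y"
    if "x \<in> P" "y \<in> P" for x y
  proof -
    have Tx: "0 < T1 x" "x - T1 x *\<^sub>R x0 \<in> K0 S" "T2 x *\<^sub>R x0 - x \<in> K0 S" "T2 x \<le> \<rho> * T1 x" using T[OF that(1)] by auto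
    have Ty: "0 < T1 y" "y - T1 y *\<^sub>R x0 \<in> K0 S" "T2 y *\<^sub>R x0 - y \<in> K0 S" "T2 y \<le> \<rho> * T1 y" using T[OF that(2)] by auto
    have a1: "\<bar>Im (\<mu> x - of_real (T1 x) * \<omega>)\<bar> \<le> Re (\<mu> x - of_real (T1 x) * \<omega>)"
      using sec[OF Tx(2)] by (simp add: \<mu>diff \<mu>scl \<mu>x0)
    have a2: "\<bar>Im (of_real (T2 x) * \<omega> - \<mu> x)\<bar> \<le> Re (of_real (T2 x) * \<omega> - \<mu> x)"
      using sec[OF Tx(3)] by (simp add: \<mu>diff \<mu>scl \<mu>x0)
    have b1: "\<bar>Im (\<mu> y - of_real (T1 y) * \<omega>)\<bar> \<le> Re (\<mu> y - of_real (T1 y) * \<omega>)"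
      using sec[OF Ty(2)] by (simp add: \<mu>diff \<mu>scl \<mu>x0)
    have b2: "\<bar>Im (of_real (T2 y) * \<omega> - \<mu> y)\<bar> \<le> Re (of_real (T2 y) * \<omega> - \<mu> y)"
      using sec[OF Ty(3)] by (simp add: \<mu>diff \<mu>scl \<mu>x0)
    show ?thesis using cbounds[OF \<omega>(1) \<omega>sec a1 a2 b1 b2 Tx(1) Ty(1) Tx(4) Ty(4) r] by simp
  qed
  show ?thesis
  proof (intro exI[where x=c] conjI cpos ballI)
    fix x y assume xy: "x \<in> P" "y \<in> P"
    have h1: "(T1 x + T1 y) / (sqrt 2 * (1 + 2 * \<rho>)) \<le> cmod (\<mu> x + \<i> * \<mu> y)"
      and h2: "cmod (\<mu> x + \<i> * \<mu> y) \<le> T2 x + T2 y" using pb[OF xy] by auto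
    show "c * ((T1 x + T1 y) / (sqrt 2 * (1 + 2 * \<rho>))) \<le> cmod (L (x, 0) + \<i> * L (y, 0))"
      unfolding eq using mult_left_mono[OF h1, of c] cpos by simp
    show "cmod (L (x, 0) + \<i> * L (y, 0)) \<le> c * (T2 x + T2 y)"
      unfolding eq using mult_left_mono[OF h2, of c] cpos by simp
  qed
qed



lemma gauge_le:
  fixes E :: "complex set"
  assumes Lb: "0 < Lb" and B: "\<And>w. w \<in> E \<Longrightarrow> Lb \<le> cmod w \<and> cmod w \<le> Ub" and R: "Ub / Lb \<le> exp \<tau>"
  shows "eln (SUP w\<in>E. ereal (cmod w)) - eln (INF w\<in>E. ereal (cmod w)) \<le> ereal \<tau>"
proof (cases "E = {}")
  case True
  then show ?thesis by (simp add: eln_def bot_ereal_def top_ereal_def)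
next
  case False
  then obtain w0 where w0: "w0 \<in> E" by blast
  define s where "s = (SUP w\<in>E. ereal (cmod w))"
  define i where "i = (INF w\<in>E. ereal (cmod w))"
  have s1: "s \<le> ereal Ub" unfolding s_def by (rule SUP_least) (use B in auto)
  have s2: "ereal Lb \<le> s" unfolding s_def using B[OF w0] by (intro SUP_upper2[OF w0]) simp
  have i1: "ereal Lb \<le> i" unfolding i_def by (rule INF_greatest) (use B in auto)
  have i2: "i \<le> ereal Ub" unfolding i_def using B[OF w0] by (intro INF_lower2[OF w0]) simp
  obtain s' where s': "s = ereal s'" using s1 s2 by (cases s) auto
  obtain i' where i': "i = ereal i'" using i1 i2 by (cases i) auto
  have "Lb \<le> i'" "s' \<le> Ub" "Lb \<le> s'" using s' i' s1 s2 i1 by auto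
  then have ip: "0 < i'" "0 < s'" using Lb by auto
  have "eln s - eln i = ereal (ln s' - ln i')" using s' i' ip unfolding eln_def by simp
  moreover have "ln s' - ln i' \<le> \<tau>"
  proof -
    have "s' / i' \<le> Ub / Lb" using \<open>Lb \<le> i'\<close> \<open>s' \<le> Ub\<close> ip Lb by (intro frac_le) auto
    then have "s' / i' \<le> exp \<tau>" using R by simp
    then have "ln (s' / i') \<le> ln (exp \<tau>)" using ip by (subst ln_le_cancel_iff) auto
    then have "ln (s' / i') \<le> \<tau>" by simp
    then show ?thesis using ip by (simp add: ln_div)
  qed
  ultimately show ?thesis unfolding s_def i_def by simp
qed

lemma ratio_arith:
  fixes Ah Ag Bh Bg \<rho> zz :: real
  assumes "0 < Ah" "0 < Ag" "0 < Bh" "0 < Bg" "Bh \<le> \<rho> * Ah" "Bg \<le> \<rho> * Ag" "1 \<le> \<rho>" "0 < zz"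
  shows "(zz * Bh * (sqrt 2 * (1 + 2 * \<rho>)) / Ag) / (zz * Ah / (sqrt 2 * (1 + 2 * \<rho>) * Bg)) \<le> 18 * \<rho> ^ 4"
proof -
  define K where "K = sqrt 2 * (1 + 2 * \<rho>)"
  have Kp: "0 < K" unfolding K_def using assms by simp
  have "(zz * Bh * K / Ag) / (zz * Ah / (K * Bg)) = K\<^sup>2 * (Bh * Bg) / (Ah * Ag)"
    using assms Kp by (simp add: field_simps power2_eq_square)
  also have "\<dots> \<le> K\<^sup>2 * (\<rho>\<^sup>2 * (Ah * Ag)) / (Ah * Ag)"
  proof -
    have "Bh * Bg \<le> (\<rho> * Ah) * (\<rho> * Ag)" using assms by (intro mult_mono) auto
    then have "Bh * Bg \<le> \<rho>\<^sup>2 * (Ah * Ag)" by (simp add: power2_eq_square algebra_simps)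
    then show ?thesis using assms by (intro divide_right_mono mult_left_mono) auto
  qed
  also have "\<dots> = K\<^sup>2 * \<rho>\<^sup>2" using assms by simp
  also have "\<dots> \<le> (18 * \<rho>\<^sup>2) * \<rho>\<^sup>2"
  proof -
    have "K\<^sup>2 = 2 * (1 + 2 * \<rho>)\<^sup>2" unfolding K_def by (simp add: power_mult_distrib)
    also have "\<dots> \<le> 2 * (3 * \<rho>)\<^sup>2" using assms by (intro mult_left_mono power_mono) auto
    also have "\<dots> = 18 * \<rho>\<^sup>2" by (simp add: power_mult_distrib)
    finally show ?thesis by (intro mult_right_mono) auto
  qed
  also have "\<dots> = 18 * \<rho> ^ 4" by (simp add: power_def eval_nat_numeral)
  finally show ?thesis unfolding K_def .
qed

lemma exp_target:
  fixes \<Delta> \<kappa> :: real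
  assumes "0 \<le> \<Delta>" "0 < \<kappa>" "\<kappa> < 1"
  shows "18 * (exp \<Delta> / \<kappa>) ^ 4 \<le> exp (8 * \<Delta> + 2 * ln (3 * sqrt 2 / \<kappa>\<^sup>2))"
proof -
  have q: "0 < 3 * sqrt 2 / \<kappa>\<^sup>2" using assms by simp
  have "exp (8 * \<Delta> + 2 * ln (3 * sqrt 2 / \<kappa>\<^sup>2)) = exp (8 * \<Delta>) * (3 * sqrt 2 / \<kappa>\<^sup>2)\<^sup>2"
  proof -
    have "exp (2 * ln (3 * sqrt 2 / \<kappa>\<^sup>2)) = (exp (ln (3 * sqrt 2 / \<kappa>\<^sup>2)))\<^sup>2"
      using exp_of_nat_mult[of 2 "ln (3 * sqrt 2 / \<kappa>\<^sup>2)"] by simp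
    also have "\<dots> = (3 * sqrt 2 / \<kappa>\<^sup>2)\<^sup>2" using q by simp
    finally show ?thesis by (simp add: exp_add)
  qed
  also have "(3 * sqrt 2 / \<kappa>\<^sup>2)\<^sup>2 = 18 / \<kappa> ^ 4"
    by (simp add: power_divide power_mult_distrib)
  finally have e: "exp (8 * \<Delta> + 2 * ln (3 * sqrt 2 / \<kappa>\<^sup>2)) = exp (8 * \<Delta>) * (18 / \<kappa> ^ 4)" .
  have "(exp \<Delta> / \<kappa>) ^ 4 = exp (4 * \<Delta>) / \<kappa> ^ 4"
    by (simp add: power_divide exp_of_nat_mult[symmetric])
  also have "\<dots> \<le> exp (8 * \<Delta>) / \<kappa> ^ 4" using assms by (intro divide_right_mono) auto
  finally show ?thesis unfolding e by (simp add: field_simps)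
qed



lemma cext_cmul: "bounded_linear A \<Longrightarrow> cext A (cmul z (x, y)) = cmul z (A x, A y)"
  by (simp add: cext_def cmul_def blin)

theorem lemma5p16:
  fixes V1 :: "'a::banach set" and S1 :: "('a \<Rightarrow> real) set" and e1 :: 'a and m1 :: "'a \<Rightarrow> real"
    and V2 :: "'b::banach set" and S2 :: "('b \<Rightarrow> real) set" and e2 :: 'b and m2 :: "'b \<Rightarrow> real"
    and \<kappa> :: real and A :: "'a \<Rightarrow> 'b" and \<Delta>R :: real
  assumes "cone_setting V1 S1 e1 m1 \<kappa>"
    and "cone_setting V2 S2 e2 m2 \<kappa>"
    and "bounded_linear A"
    and "A ` real_cone S1 \<subseteq> real_cone S2"
    and "ereal \<Delta>R = ediam (hilbert_dist S2) (A ` real_cone S1)"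
  shows "ediam (cone_gauge S2) (cext A ` cplx_cone S1)
           \<le> ereal (8 * \<Delta>R + 2 * ln (3 * sqrt 2 / \<kappa>\<^sup>2))"
proof -
  note F2 = cs_facts[OF assms(2)]
  define P where "P = A ` real_cone S1"
  define G where "G = cext A ` cplx_cone S1"
  define \<tau> where "\<tau> = 8 * \<Delta>R + 2 * ln (3 * sqrt 2 / \<kappa>\<^sup>2)"
  have PS: "P \<subseteq> real_cone S2" using assms(4) unfolding P_def .
  show ?thesis
  proof (cases "P = {}")
    case True
    then have "cplx_cone S1 = {}" unfolding P_def cplx_cone_def by auto
    then show ?thesis unfolding ediam_def by (simp add: bot_ereal_def)
  next
    case False
    then obtain x0 where x0P: "x0 \<in> P" by blast
    have x0: "x0 \<in> real_cone S2" using x0P PS by blast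
    have dle: "hilbert_dist S2 x0 x \<le> ereal \<Delta>R" if "x \<in> P" for x
    proof -
      have "hilbert_dist S2 x0 x \<le> (SUP g\<in>P. hilbert_dist S2 x0 g)" using that by (rule SUP_upper)
      also have "\<dots> \<le> (SUP h\<in>P. SUP g\<in>P. hilbert_dist S2 h g)" using x0P by (rule SUP_upper)
      finally show ?thesis using assms(5) unfolding ediam_def P_def by simp
    qed
    have HB: "0 \<le> \<Delta>R \<and> (\<exists>t1 t2. 0 < t1 \<and> x - t1 *\<^sub>R x0 \<in> K0 S2 \<and> t2 *\<^sub>R x0 - x \<in> K0 S2 \<and> t2 \<le> exp \<Delta>R / \<kappa> * t1)"
      if "x \<in> P" for x
      using hilb_bound[OF assms(2) x0 _ dle[OF that]] that PS by blast
    have D0: "0 \<le> \<Delta>R" using HB[OF x0P] by blast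
    define \<rho> where "\<rho> = exp \<Delta>R / \<kappa>"
    have r1: "1 \<le> \<rho>"
    proof -
      have "\<kappa> \<le> exp \<Delta>R" using F2(4) D0 by (smt (verit) one_le_exp_iff)
      then show ?thesis unfolding \<rho>_def using F2(3) by simp
    qed
    have "\<forall>x\<in>P. \<exists>tt. 0 < fst tt \<and> x - fst tt *\<^sub>R x0 \<in> K0 S2 \<and> snd tt *\<^sub>R x0 - x \<in> K0 S2 \<and> snd tt \<le> \<rho> * fst tt"
    proof
      fix x assume "x \<in> P"
      then obtain t1 t2 where "0 < t1" "x - t1 *\<^sub>R x0 \<in> K0 S2" "t2 *\<^sub>R x0 - x \<in> K0 S2" "t2 \<le> exp \<Delta>R / \<kappa> * t1"
        using HB by blast
      then show "\<exists>tt. 0 < fst tt \<and> x - fst tt *\<^sub>R x0 \<in> K0 S2 \<and> snd tt *\<^sub>R x0 - x \<in> K0 S2 \<and> snd tt \<le> \<rho> * fst tt"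
        unfolding \<rho>_def by (intro exI[where x="(t1, t2)"]) auto
    qed
    then obtain f where f: "\<And>x. x \<in> P \<Longrightarrow> 0 < fst (f x) \<and> x - fst (f x) *\<^sub>R x0 \<in> K0 S2 \<and> snd (f x) *\<^sub>R x0 - x \<in> K0 S2 \<and> snd (f x) \<le> \<rho> * fst (f x)"
      by metis
    define T1 where "T1 x = fst (f x)" for x
    define T2 where "T2 x = snd (f x)" for x
    have T: "\<And>x. x \<in> P \<Longrightarrow> 0 < T1 x \<and> x - T1 x *\<^sub>R x0 \<in> K0 S2 \<and> T2 x *\<^sub>R x0 - x \<in> K0 S2 \<and> T2 x \<le> \<rho> * T1 x"
      unfolding T1_def T2_def using f by blast
    have T2p: "0 < T2 x" if "x \<in> P" for x
    proof -
      have "0 < m2 (T2 x *\<^sub>R x0 - x + x)"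
      proof -
        have "T2 x *\<^sub>R x0 - x + x = T2 x *\<^sub>R x0" by simp
        moreover have "0 \<le> m2 (T2 x *\<^sub>R x0 - x)" using F2(6) T[OF that] by blast
        moreover have "0 < m2 x" using F2(5) that PS by blast
        ultimately show ?thesis using blin(1)[OF F2(2), of "T2 x *\<^sub>R x0 - x" x] by simp
      qed
      then have "0 < T2 x * m2 x0" using blin(3)[OF F2(2)] by simp
      moreover have "0 < m2 x0" using F2(5) x0 by blast
      ultimately show ?thesis by (simp add: zero_less_mult_iff)
    qed
    have gauge: "cone_gauge S2 h g \<le> ereal \<tau>" if h: "h \<in> G" and g: "g \<in> G" for h g
    proof -
      obtain z x1 y1 where hz: "h = cext A (cmul z (x1, y1))" "z \<noteq> 0" "x1 \<in> real_cone S1" "y1 \<in> real_cone S1"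
        using h unfolding G_def cplx_cone_def by blast
      obtain z' x2 y2 where gz: "g = cext A (cmul z' (x2, y2))" "z' \<noteq> 0" "x2 \<in> real_cone S1" "y2 \<in> real_cone S1"
        using g unfolding G_def cplx_cone_def by blast
      have h': "h = cmul z (A x1, A y1)" "g = cmul z' (A x2, A y2)" using hz gz cext_cmul[OF assms(3)] by auto
      have inP: "A x1 \<in> P" "A y1 \<in> P" "A x2 \<in> P" "A y2 \<in> P" unfolding P_def using hz gz by auto
      define Ah where "Ah = T1 (A x1) + T1 (A y1)"
      define Bh where "Bh = T2 (A x1) + T2 (A y1)"
      define Ag where "Ag = T1 (A x2) + T1 (A y2)"
      define Bg where "Bg = T2 (A x2) + T2 (A y2)"
      define K where "K = sqrt 2 * (1 + 2 * \<rho>)"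
      have pos: "0 < Ah" "0 < Ag" "0 < Bh" "0 < Bg" "Bh \<le> \<rho> * Ah" "Bg \<le> \<rho> * Ag"
        unfolding Ah_def Ag_def Bh_def Bg_def using T[OF inP(1)] T[OF inP(2)] T[OF inP(3)] T[OF inP(4)]
          T2p[OF inP(1)] T2p[OF inP(2)] T2p[OF inP(3)] T2p[OF inP(4)] by (auto simp: distrib_left)
      have Kp: "0 < K" unfolding K_def using r1 by simp
      define zz where "zz = cmod z / cmod z'"
      have zzp: "0 < zz" unfolding zz_def using hz gz by simp
      define Lb where "Lb = zz * Ah / (K * Bg)"
      define Ub where "Ub = zz * Bh * K / Ag"
      have Lbp: "0 < Lb" unfolding Lb_def using pos Kp zzp by simp
      have bnd: "Lb \<le> cmod w \<and> cmod w \<le> Ub" if w: "w \<in> E_set S2 h g" for w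
      proof -
        obtain L where L: "L \<in> cplx_cone_dual S2" "w = L h / L g" using w unfolding E_set_def by blast
        obtain c where c: "0 < c" "\<forall>x\<in>P. \<forall>y\<in>P. c * ((T1 x + T1 y) / K) \<le> cmod (L (x, 0) + \<i> * L (y, 0))
            \<and> cmod (L (x, 0) + \<i> * L (y, 0)) \<le> c * (T2 x + T2 y)"
          using dual_bounds[OF assms(2) L(1) x0 r1 T] unfolding K_def by blast
        define X1 where "X1 = L (A x1, 0) + \<i> * L (A y1, 0)"
        define X2 where "X2 = L (A x2, 0) + \<i> * L (A y2, 0)"
        have X1: "c * (Ah / K) \<le> cmod X1" "cmod X1 \<le> c * Bh" using c(2) inP unfolding X1_def Ah_def Bh_def by auto
        have X2: "c * (Ag / K) \<le> cmod X2" "cmod X2 \<le> c * Bg" using c(2) inP unfolding X2_def Ag_def Bg_def by auto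
        have X2p: "0 < cmod X2" using X2(1) c(1) pos Kp by (smt (verit) divide_pos_pos mult_pos_pos)
        have "L h = z * X1" "L g = z' * X2" unfolding X1_def X2_def h' using dual_decomp(4)[OF L(1)] by auto
        then have cw: "cmod w = zz * (cmod X1 / cmod X2)" unfolding L(2) zz_def by (simp add: norm_mult norm_divide)
        have lo: "Ah / (K * Bg) \<le> cmod X1 / cmod X2"
        proof -
          have "Ah / (K * Bg) = (c * (Ah / K)) / (c * Bg)" using c(1) by (simp add: field_simps)
          also have "\<dots> \<le> cmod X1 / cmod X2" using X1(1) X2(2) X2p c(1) pos Kp by (intro frac_le) auto
          finally show ?thesis .
        qed
        have up: "cmod X1 / cmod X2 \<le> Bh * K / Ag"
        proof -
          have "cmod X1 / cmod X2 \<le> (c * Bh) / (c * (Ag / K))" using X1(2) X2(1) c(1) pos Kp by (intro frac_le) auto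
          also have "\<dots> = Bh * K / Ag" using c(1) Kp by (simp add: field_simps)
          finally show ?thesis .
        qed
        show ?thesis unfolding cw Lb_def Ub_def using lo up zzp
          by (auto simp: mult_left_mono times_divide_eq_right[symmetric] simp del: times_divide_eq_right)
      qed
      have "Ub / Lb \<le> 18 * \<rho> ^ 4" unfolding Ub_def Lb_def K_def using ratio_arith[OF pos r1 zzp] .
      also have "\<dots> \<le> exp \<tau>" unfolding \<rho>_def \<tau>_def using exp_target[OF D0 F2(3) F2(4)] .
      finally have R: "Ub / Lb \<le> exp \<tau>" .
      show ?thesis unfolding cone_gauge_def using gauge_le[OF Lbp bnd R] by blast
    qed
    have "ediam (cone_gauge S2) G \<le> ereal \<tau>" unfolding ediam_def
      by (intro SUP_least) (use gauge in blast)
    then show ?thesis unfolding G_def \<tau>_def .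
  qed
qed

end
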